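(* For $i\in\{1,\dots,n\}$ let $g_i:\mathbb{R}\to]-\infty,+\infty]$ be proper, lower semicontinuous and convex, and define $g:\mathbb{R}^n\to]-\infty,+\infty]$ by $g(x)=\sum_{i=1}^n g_i(x_i)$. Then for every $\alpha>0$ and every $\eta\in\mathbb{R}^n_{>0}$, both $\mathrm{prox}_{\alpha g}$ (which equals the resolvent $J_{\alpha\partial g}=(\mathrm{Id}+\alpha\partial g)^{-1}$) and $2\,\mathrm{prox}_{\alpha g}-\mathrm{Id}$ (which equals $R_{\alpha\partial g}=2J_{\alpha\partial g}-\mathrm{Id}$) are nonexpansive with respect to $\|\cdot\|_{\infty,[\eta]^{-1}}$, i.e., $\|T(x)-T(y)\|_{\infty,[\eta]^{-1}}\le\|x-y\|_{\infty,[\eta]^{-1}}$ for all $x,y$ for each of these maps $T$.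
   Context: For a proper lower semicontinuous convex $h:\mathbb{R}^n\to]-\infty,+\infty]$, the proximal operator is $\mathrm{prox}_h(x)=\arg\min_{z\in\mathbb{R}^n}\tfrac12\|x-z\|_2^2+h(z)$ (single-valued), and $\partial h$ denotes the subdifferential. For $\eta\in\mathbb{R}^n_{>0}$, $\|x\|_{\infty,[\eta]^{-1}}=\max_i|x_i|/\eta_i$. *)

theory Defs
  imports "HOL-Analysis.Analysis"
begin

definition proper_fun :: "('a \<Rightarrow> ereal) \<Rightarrow> bool" where
  "proper_fun f \<longleftrightarrow> (\<forall>x. f x \<noteq> -\<infinity>) \<and> (\<exists>x. f x \<noteq> \<infinity>)"

definition lsc_fun :: "('a::topological_space \<Rightarrow> ereal) \<Rightarrow> bool" where
  "lsc_fun f \<longleftrightarrow> (\<forall>x. f x \<le> Liminf (at x) f)"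

definition convex_fun :: "('a::real_vector \<Rightarrow> ereal) \<Rightarrow> bool" where
  "convex_fun f \<longleftrightarrow> (\<forall>x y t. 0 \<le> t \<and> t \<le> 1 \<longrightarrow>
      f ((1 - t) *\<^sub>R x + t *\<^sub>R y) \<le> ereal (1 - t) * f x + ereal t * f y)"

definition prox :: "('a::real_normed_vector \<Rightarrow> ereal) \<Rightarrow> 'a \<Rightarrow> 'a" where
  "prox h x = (THE z. \<forall>w. ereal ((1/2) * (norm (x - z))\<^sup>2) + h z
                         \<le> ereal ((1/2) * (norm (x - w))\<^sup>2) + h w)"

definition sep_fun :: "('n::finite \<Rightarrow> real \<Rightarrow> ereal) \<Rightarrow> real^'n \<Rightarrow> ereal" where
  "sep_fun gs x = (\<Sum>i\<in>UNIV. gs i (x $ i))"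

definition wnorm_inf :: "real^'n::finite \<Rightarrow> real^'n \<Rightarrow> real" where
  "wnorm_inf \<eta> x = Max (range (\<lambda>i. \<bar>x $ i\<bar> / \<eta> $ i))"

end

theory Submission
  imports Defs
begin

definition obj :: "('a::real_normed_vector \<Rightarrow> ereal) \<Rightarrow> 'a \<Rightarrow> 'a \<Rightarrow> ereal" where
  "obj h x w = ereal ((1/2) * (norm (x - w))\<^sup>2) + h w"

lemma small_t:
  fixes A B C :: real
  assumes "\<And>t. 0 < t \<Longrightarrow> t \<le> 1 \<Longrightarrow> A \<le> B + t * C"
  shows "A \<le> B"
proof (rule ccontr)
  assume "\<not> A \<le> B"
  define t where "t = min 1 ((A - B) / (\<bar>C\<bar> + 1))"
  have t0: "0 < t" "t \<le> 1" using \<open>\<not> A \<le> B\<close> by (auto simp: t_def)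
  have "t * C \<le> t * \<bar>C\<bar>" using t0 by (simp add: mult_left_mono)
  also have "\<dots> \<le> ((A - B) / (\<bar>C\<bar> + 1)) * \<bar>C\<bar>" by (rule mult_right_mono) (auto simp: t_def)
  also have "\<dots> < A - B" using \<open>\<not> A \<le> B\<close>
    by (simp add: field_simps)
  finally show False using assms[OF t0] by linarith
qed

lemma vi:
  fixes h :: "'a::real_inner \<Rightarrow> ereal"
  assumes cv: "convex_fun h" and nm: "\<And>z. h z \<noteq> -\<infinity>" and fin: "h p \<noteq> \<infinity>"
    and mn: "\<And>w. obj h x p \<le> obj h x w"
  shows "ereal (inner (x - p) (w - p)) + h p \<le> h w"
proof (cases "h w = \<infinity>")
  case True then show ?thesis by simp
next
  case False
  obtain a where a: "h p = ereal a" using fin nm by (cases "h p") auto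
  obtain b where b: "h w = ereal b" using False nm by (cases "h w") auto
  define d where "d = w - p"
  have key: "inner (x-p) d \<le> b - a + t * ((norm d)\<^sup>2 / 2)" if t: "0 < t" "t \<le> 1" for t
  proof -
    have "h ((1-t) *\<^sub>R p + t *\<^sub>R w) \<le> ereal (1-t) * h p + ereal t * h w"
      using cv t unfolding convex_fun_def by auto
    also have "\<dots> = ereal ((1-t)*a + t*b)" by (simp add: a b)
    finally have hle: "h (p + t *\<^sub>R d) \<le> ereal ((1-t)*a + t*b)"
      by (simp add: d_def algebra_simps)
    obtain c where c: "h (p + t *\<^sub>R d) = ereal c" and cle: "c \<le> (1-t)*a + t*b"
      using hle nm[of "p + t *\<^sub>R d"] by (cases "h (p + t *\<^sub>R d)") auto
    have "obj h x p \<le> obj h x (p + t *\<^sub>R d)" by (rule mn)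
    hence 1: "(1/2)*(norm(x-p))\<^sup>2 + a \<le> (1/2)*(norm(x - (p + t *\<^sub>R d)))\<^sup>2 + c"
      by (simp add: obj_def a c)
    have 2: "(norm(x - (p + t *\<^sub>R d)))\<^sup>2 = (norm(x-p))\<^sup>2 - 2*t*inner (x-p) d + t\<^sup>2 * (norm d)\<^sup>2"
    proof -
      have e: "x - (p + t *\<^sub>R d) = (x - p) - t *\<^sub>R d" by simp
      show ?thesis unfolding e power2_norm_eq_inner
        by (simp add: inner_diff_left inner_diff_right inner_commute algebra_simps power2_eq_square)
    qed
    have "t * inner (x-p) d \<le> t * (b - a + t * ((norm d)\<^sup>2 / 2))"
      using 1 2 cle by (simp add: algebra_simps power2_eq_square)
    then show ?thesis using t by simp
  qed
  have "inner (x-p) d \<le> b - a" by (rule small_t[OF key])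
  then show ?thesis by (simp add: a b d_def)
qed

lemma vi_unique:
  fixes h :: "'a::real_inner \<Rightarrow> ereal"
  assumes cv: "convex_fun h" and nm: "\<And>z. h z \<noteq> -\<infinity>"
    and fp: "h p \<noteq> \<infinity>" and fq: "h q \<noteq> \<infinity>"
    and mp: "\<And>w. obj h x p \<le> obj h x w" and mq: "\<And>w. obj h y q \<le> obj h y w"
  shows "(norm (p - q))\<^sup>2 \<le> inner (p - q) (x - y)"
proof -
  have 1: "ereal (inner (x - p) (q - p)) + h p \<le> h q" by (rule vi[OF cv nm fp mp])
  have 2: "ereal (inner (y - q) (p - q)) + h q \<le> h p" by (rule vi[OF cv nm fq mq])
  obtain a where a: "h p = ereal a" using fp nm by (cases "h p") auto
  obtain b where b: "h q = ereal b" using fq nm by (cases "h q") auto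
  have "inner (x - p) (q - p) + inner (y - q) (p - q) \<le> 0" using 1 2 by (simp add: a b)
  then show ?thesis
    by (simp add: power2_norm_eq_inner inner_diff_left inner_diff_right inner_commute algebra_simps)
qed
lemma lsc_nhds:
  assumes "lsc_fun f" "y < f l"
  shows "eventually (\<lambda>z. y < f z) (nhds l)"
proof -
  have "f l \<le> Liminf (at l) f" using assms(1) unfolding lsc_fun_def by auto
  then have "eventually (\<lambda>z. y < f z) (at l)" using assms(2) le_Liminf_iff by blast
  then show ?thesis using assms(2) eventually_nhds_conv_at by blast
qed

lemma lsc_seq:
  assumes "lsc_fun f" "y < f l" "X \<longlonglongrightarrow> l"
  shows "eventually (\<lambda>k. y < f (X k)) sequentially"
  using eventually_compose_filterlim[OF lsc_nhds[OF assms(1,2)] assms(3)] .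

lemma obj_lsc:
  fixes f :: "real \<Rightarrow> ereal"
  assumes ls: "lsc_fun f" and nm: "\<And>z. f z \<noteq> -\<infinity>" and al: "\<alpha> > 0"
    and c: "ereal c < obj (\<lambda>z. ereal \<alpha> * f z) x l" and X: "X \<longlonglongrightarrow> l"
  shows "eventually (\<lambda>k. ereal c < obj (\<lambda>z. ereal \<alpha> * f z) x (X k)) sequentially"
proof (cases "f l = \<infinity>")
  case True
  define M where "M = c / \<alpha> + 1"
  have "eventually (\<lambda>k. ereal M < f (X k)) sequentially"
    using lsc_seq[OF ls _ X] True by simp
  then show ?thesis
  proof (rule eventually_mono)
    fix k assume h: "ereal M < f (X k)"
    show "ereal c < obj (\<lambda>z. ereal \<alpha> * f z) x (X k)"
    proof (cases "f (X k)")
      case (real b)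
      have "c < \<alpha> * M" using al by (simp add: M_def field_simps)
      also have "\<alpha> * M < \<alpha> * b" using h real al by simp
      finally have "c < (1/2) * (norm (x - X k))\<^sup>2 + \<alpha> * b" using zero_le_power2[of "norm (x - X k)"] by linarith
      then show ?thesis using real by (simp add: obj_def)
    qed (use al nm in \<open>auto simp: obj_def\<close>)
  qed
next
  case False
  then obtain b where b: "f l = ereal b" using nm by (cases "f l") auto
  define q where "q = (\<lambda>z. (1/2) * (norm (x - z))\<^sup>2)"
  have cl: "c < q l + \<alpha> * b" using c by (simp add: obj_def b q_def)
  define e where "e = (q l + \<alpha> * b - c) / 2"
  have e0: "e > 0" using cl by (simp add: e_def)
  have "ereal (b - e/\<alpha>) < f l" using b e0 al by simp
  then have ev1: "eventually (\<lambda>k. ereal (b - e/\<alpha>) < f (X k)) sequentially"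
    using lsc_seq[OF ls _ X] by simp
  have "(\<lambda>k. q (X k)) \<longlonglongrightarrow> q l" unfolding q_def by (intro tendsto_intros X)
  then have ev2: "eventually (\<lambda>k. q l - e < q (X k)) sequentially"
    using e0 by (intro order_tendstoD(1)) auto
  show ?thesis using ev1 ev2
  proof eventually_elim
    case (elim k)
    show ?case
    proof (cases "f (X k)")
      case (real b')
      have "\<alpha> * (b - e/\<alpha>) < \<alpha> * b'" using elim(1) real al by simp
      moreover have "\<alpha> * (b - e/\<alpha>) = \<alpha> * b - e" using al by (simp add: field_simps)
      ultimately have "\<alpha> * b - e < \<alpha> * b'" by simp
      then have "c < q (X k) + \<alpha> * b'" using elim(2) unfolding e_def by (simp add: field_simps)
      then show ?thesis using real by (simp add: obj_def q_def)
    qed (use al nm in \<open>auto simp: obj_def\<close>)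
  qed
qed


lemma aux1:
  fixes u A w q B :: real
  assumes "A * w \<le> A * (u + q)"
  shows "- A\<^sup>2 / 2 - A * q + B \<le> (1/2) * u\<^sup>2 - A * w + B"
proof -
  have "0 \<le> (u - A)\<^sup>2" by simp
  then show ?thesis using assms by (simp add: power2_diff algebra_simps)
qed
lemma aux2:
  fixes u A w q B V E :: real
  assumes "A*w \<le> A*(u+q)" "u*1 < u*(u/2 - A)" "u > \<bar>E\<bar> + 1" "E = V + 1 + A*q - B"
    "(1/2)*(u*u) - A*w + B \<le> V + 1"
  shows False
proof -
  have a: "u*(u/2 - A) = (1/2)*(u*u) - A*u" by (simp add: algebra_simps)
  have b: "A*(u+q) = A*u + A*q" by (simp add: algebra_simps)
  show False using assms a b by linarith
qed

lemma exist1: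
  fixes f :: "real \<Rightarrow> ereal" and \<alpha> x :: real
  assumes pr: "proper_fun f" and ls: "lsc_fun f" and cv: "convex_fun f" and al: "\<alpha> > 0"
  shows "\<exists>p. (\<forall>w. obj (\<lambda>z. ereal \<alpha> * f z) x p \<le> obj (\<lambda>z. ereal \<alpha> * f z) x w) \<and> f p \<noteq> \<infinity>"
proof -
  define h where "h = (\<lambda>z. ereal \<alpha> * f z)"
  have nm: "\<And>z. f z \<noteq> -\<infinity>" using pr unfolding proper_fun_def by auto
  obtain z0 where "f z0 \<noteq> \<infinity>" using pr unfolding proper_fun_def by auto
  then obtain c0 where c0: "f z0 = ereal c0" using nm by (cases "f z0") auto
  have "f z0 \<le> Liminf (at z0) f" using ls unfolding lsc_fun_def by auto
  then have "\<forall>y < f z0. eventually (\<lambda>z. y < f z) (at z0)" by (rule le_Liminf_iff[THEN iffD1])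
  moreover have "ereal (c0 - 1) < f z0" using c0 by simp
  ultimately have "eventually (\<lambda>z. ereal (c0 - 1) < f z) (at z0)" by blast
  then obtain \<delta> where d0: "\<delta> > 0" and dd: "\<And>z. z \<noteq> z0 \<Longrightarrow> dist z z0 < \<delta> \<Longrightarrow> ereal (c0 - 1) < f z"
    unfolding eventually_at by auto
  have loc: "ereal (c0 - 1) < f z" if "\<bar>z - z0\<bar> < \<delta>" for z
  proof (cases "z = z0")
    case True then show ?thesis using c0 by simp
  next
    case False then show ?thesis using dd that by (simp add: dist_real_def)
  qed
  define K where "K = 2 / \<delta>"
  have K0: "K > 0" using d0 by (simp add: K_def)
  have glob: "ereal (c0 - 1 - K * \<bar>z - z0\<bar>) \<le> f z" for z
  proof (cases "\<bar>z - z0\<bar> < \<delta>")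
    case True
    have "ereal (c0 - 1 - K * \<bar>z - z0\<bar>) \<le> ereal (c0 - 1)" using K0 by simp
    then show ?thesis using loc[OF True] by (meson less_imp_le order_trans)
  next
    case False
    define u where "u = \<bar>z - z0\<bar>"
    have u0: "u \<ge> \<delta>" using False by (simp add: u_def)
    define t where "t = \<delta> / (2 * u)"
    have t0: "0 < t" "t \<le> 1" using u0 d0 by (auto simp: t_def field_simps)
    have "\<bar>((1 - t) * z0 + t * z) - z0\<bar> = t * u" 
    proof -
      have "((1 - t) * z0 + t * z) - z0 = t * (z - z0)" by (simp add: algebra_simps)
      then show ?thesis using t0 by (simp add: abs_mult u_def)
    qed
    also have "\<dots> = \<delta> / 2" using u0 d0 by (simp add: t_def)
    finally have "\<bar>((1 - t) * z0 + t * z) - z0\<bar> < \<delta>" using d0 by simp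
    then have "ereal (c0 - 1) < f ((1 - t) *\<^sub>R z0 + t *\<^sub>R z)" using loc by simp
    also have "\<dots> \<le> ereal (1 - t) * f z0 + ereal t * f z" using cv t0 unfolding convex_fun_def by auto
    finally have lt: "ereal (c0 - 1) < ereal (1 - t) * ereal c0 + ereal t * f z" using c0 by simp
    show ?thesis
    proof (cases "f z")
      case (real b)
      have "c0 - 1 < (1 - t) * c0 + t * b" using lt real by simp
      then have "c0 - 1 / t < b" using t0 by (simp add: field_simps)
      moreover have "1 / t = K * u" using u0 d0 by (simp add: t_def K_def)
      ultimately show ?thesis using real by (simp add: u_def)
    qed (use nm in auto)
  qed
  define L where "L = (\<lambda>z. (1/2) * (x - z)\<^sup>2 + \<alpha> * (c0 - 1 - K * \<bar>z - z0\<bar>))"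
  have low: "ereal (L z) \<le> obj h x z" for z
  proof (cases "f z")
    case (real b)
    have "\<alpha> * (c0 - 1 - K * \<bar>z - z0\<bar>) \<le> \<alpha> * b" using glob[of z] real al by simp
    then show ?thesis using real by (simp add: L_def obj_def h_def)
  qed (use nm al in \<open>auto simp: obj_def h_def\<close>)
  define Lmin where "Lmin = - (\<alpha> * K)\<^sup>2 / 2 - \<alpha> * K * \<bar>x - z0\<bar> + \<alpha> * (c0 - 1)"
  have Lge: "Lmin \<le> L z" for z
  proof -
    have 1: "0 \<le> (\<bar>z - x\<bar> - \<alpha> * K)\<^sup>2" by simp
    have 2: "\<alpha> * K * \<bar>z - z0\<bar> \<le> \<alpha> * K * (\<bar>z - x\<bar> + \<bar>x - z0\<bar>)"
      using al K0 by (intro mult_left_mono) auto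
    have 3: "(x - z)\<^sup>2 = \<bar>z - x\<bar>\<^sup>2" by (simp add: power2_commute)
    have eq: "L z = (1/2)*\<bar>z-x\<bar>\<^sup>2 - (\<alpha>*K)*\<bar>z-z0\<bar> + \<alpha>*(c0-1)"
      unfolding L_def using 3 by (simp add: algebra_simps)
    show ?thesis unfolding Lmin_def eq using aux1[OF 2] by simp
  qed
  define V0 where "V0 = (1/2) * (x - z0)\<^sup>2 + \<alpha> * c0"
  have V0: "obj h x z0 = ereal V0" by (simp add: obj_def h_def c0 V0_def)
  define E where "E = V0 + 1 + \<alpha> * K * \<bar>x - z0\<bar> - \<alpha> * (c0 - 1)"
  define R where "R = max (2 * \<alpha> * K + 2) (\<bar>E\<bar> + 1)"
  have bnd: "\<bar>z - x\<bar> \<le> R" if "L z \<le> V0 + 1" for z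
  proof (rule ccontr)
    assume nt: "\<not> \<bar>z - x\<bar> \<le> R"
    define u where "u = \<bar>z - x\<bar>"
    have u1: "u > 2 * \<alpha> * K + 2" "u > \<bar>E\<bar> + 1" using nt by (auto simp: u_def R_def)
    have ul: "u * 1 < u * (u / 2 - \<alpha> * K)" using u1 by (intro mult_strict_left_mono) auto
    have 2: "\<alpha> * K * \<bar>z - z0\<bar> \<le> \<alpha> * K * (\<bar>z - x\<bar> + \<bar>x - z0\<bar>)"
      using al K0 by (intro mult_left_mono) auto
    have 3: "(x - z)\<^sup>2 = u * u" by (simp add: u_def power2_eq_square algebra_simps)
    have two': "\<alpha> * K * \<bar>z - z0\<bar> \<le> \<alpha> * K * (u + \<bar>x - z0\<bar>)" using 2 by (simp add: u_def)
    have eq: "L z = (1/2)*(u*u) - (\<alpha>*K)*\<bar>z-z0\<bar> + \<alpha>*(c0-1)"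
      unfolding L_def using 3 by (simp add: algebra_simps)
    have u2: "u > \<bar>E\<bar> + 1" using u1 by simp
    have "L z \<le> V0 + 1" using that .
    then have L2: "(1/2)*(u*u) - (\<alpha>*K)*\<bar>z-z0\<bar> + \<alpha>*(c0-1) \<le> V0 + 1" using eq by simp
    show False using aux2[OF two' ul u2 E_def L2] .
  qed
  define m where "m = (INF z. obj h x z)"
  have mle: "m \<le> ereal V0" unfolding m_def by (metis V0 INF_lower UNIV_I)
  have mge: "ereal Lmin \<le> m" unfolding m_def
    by (rule INF_greatest) (metis Lge low ereal_less_eq(3) order_trans)
  obtain mr where mr: "m = ereal mr" using mle mge by (cases m) auto
  have "\<forall>k::nat. \<exists>z. obj h x z < ereal (mr + 1 / (Suc k))"
  proof
    fix k :: nat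
    have "m < ereal (mr + 1 / (Suc k))" using mr by simp
    then show "\<exists>z. obj h x z < ereal (mr + 1 / (Suc k))" unfolding m_def by (simp add: INF_less_iff)
  qed
  then obtain zs where zs: "\<And>k. obj h x (zs k) < ereal (mr + 1 / (Suc k))" by metis
  have zsin: "zs k \<in> cball x R" for k
  proof -
    have "ereal (L (zs k)) < ereal (mr + 1 / (Suc k))" using low zs le_less_trans by blast
    then have "L (zs k) < mr + 1 / (Suc k)" by (simp only: less_ereal.simps)
    moreover have "mr \<le> V0" using mle mr by simp
    moreover have "1 / real (Suc k) \<le> 1" by simp
    ultimately have "L (zs k) \<le> V0 + 1" unfolding ereal_less by linarith
    then have "\<bar>zs k - x\<bar> \<le> R" by (rule bnd)
    then show ?thesis by (simp add: dist_real_def abs_minus_commute)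
  qed
  obtain l r where r: "strict_mono r" and lim: "(zs \<circ> r) \<longlonglongrightarrow> l"
    using compact_imp_seq_compact[OF compact_cball[of x R]] zsin unfolding seq_compact_def by metis
  have lmin: "obj h x l \<le> m"
  proof (rule ccontr)
    assume "\<not> ?thesis"
    then have "ereal mr < obj h x l" using mr by simp
    then obtain c where c1': "ereal mr < ereal c" and c2: "ereal c < obj h x l" using ereal_dense2 by blast
    from c1' have c1: "mr < c" by simp
    have ev1: "eventually (\<lambda>k. ereal c < obj h x ((zs \<circ> r) k)) sequentially"
      using obj_lsc[OF ls nm al _ lim] c2 unfolding h_def by simp
    obtain N :: nat where N: "1 / Suc N < c - mr" using c1
      by (metis diff_gt_0_iff_gt inverse_eq_divide of_nat_Suc reals_Archimedean)
    have ev2: "eventually (\<lambda>k. obj h x ((zs \<circ> r) k) < ereal c) sequentially"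
      unfolding eventually_sequentially
    proof (intro exI allI impI)
      fix k assume "N \<le> k"
      then have "N \<le> r k" using r seq_suble le_trans by blast
      then have "1 / real (Suc (r k)) \<le> 1 / Suc N" by (simp add: frac_le)
      then have "mr + 1 / real (Suc (r k)) < c" using N by simp
      then show "obj h x ((zs \<circ> r) k) < ereal c" using zs[of "r k"] by (simp add: order_less_trans)
    qed
    from ev1 ev2 have "eventually (\<lambda>k. False) sequentially"
      by eventually_elim (simp add: not_less_iff_gr_or_eq order_less_asym)
    then show False by simp
  qed
  show ?thesis
  proof (intro exI conjI allI)
    fix w show "obj (\<lambda>z. ereal \<alpha> * f z) x l \<le> obj (\<lambda>z. ereal \<alpha> * f z) x w"
      using lmin unfolding m_def h_def by (meson INF_lower UNIV_I order_trans)
  next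
    show "f l \<noteq> \<infinity>"
    proof
      assume "f l = \<infinity>"
      then have "obj h x l = \<infinity>" using al by (simp add: obj_def h_def)
      then show False using lmin mr by simp
    qed
  qed
qed



lemma sum_ereal_mult_left:
  fixes c :: real and f :: "'b \<Rightarrow> ereal"
  assumes "c \<ge> 0"
  shows "ereal c * (\<Sum>i\<in>A. f i) = (\<Sum>i\<in>A. ereal c * f i)"
  using assms by (induct A rule: infinite_finite_induct) (auto simp: ereal_pos_distrib)

lemma sum_not_minf:
  fixes f :: "'b \<Rightarrow> ereal"
  assumes "\<And>i. f i \<noteq> -\<infinity>"
  shows "sum f A \<noteq> -\<infinity>"
  using assms by (induct A rule: infinite_finite_induct) auto

lemma convex_scale:
  fixes f :: "'a::real_vector \<Rightarrow> ereal"
  assumes cv: "convex_fun f" and al: "\<alpha> > 0"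
  shows "convex_fun (\<lambda>z. ereal \<alpha> * f z)"
  unfolding convex_fun_def
proof (intro allI impI)
  fix x y and t :: real assume t: "0 \<le> t \<and> t \<le> 1"
  have "ereal \<alpha> * f ((1 - t) *\<^sub>R x + t *\<^sub>R y) \<le> ereal \<alpha> * (ereal (1 - t) * f x + ereal t * f y)"
    using cv t al unfolding convex_fun_def by (intro ereal_mult_left_mono) auto
  also have "\<dots> = ereal \<alpha> * (ereal (1 - t) * f x) + ereal \<alpha> * (ereal t * f y)"
    using al by (intro ereal_pos_distrib) auto
  also have "\<dots> = ereal (1 - t) * (ereal \<alpha> * f x) + ereal t * (ereal \<alpha> * f y)"
    by (simp add: mult.left_commute)
  finally show "ereal \<alpha> * f ((1 - t) *\<^sub>R x + t *\<^sub>R y) \<le> ereal (1 - t) * (ereal \<alpha> * f x) + ereal t * (ereal \<alpha> * f y)" .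
qed

lemma decomp:
  fixes gs :: "'n::finite \<Rightarrow> real \<Rightarrow> ereal" and x w :: "real^'n"
  assumes "\<alpha> \<ge> 0"
  shows "obj (\<lambda>z. ereal \<alpha> * sep_fun gs z) x w = (\<Sum>i\<in>UNIV. obj (\<lambda>z. ereal \<alpha> * gs i z) (x$i) (w$i))"
proof -
  have n: "(norm (x - w))\<^sup>2 = (\<Sum>i\<in>UNIV. (norm (x$i - w$i))\<^sup>2)"
    unfolding power2_norm_eq_inner inner_vec_def by simp
  have "obj (\<lambda>z. ereal \<alpha> * sep_fun gs z) x w
      = ereal (\<Sum>i\<in>UNIV. (1/2) * (norm (x$i - w$i))\<^sup>2) + (\<Sum>i\<in>UNIV. ereal \<alpha> * gs i (w$i))"
    unfolding obj_def sep_fun_def n sum_distrib_left by (simp add: sum_ereal_mult_left[OF assms])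
  also have "\<dots> = (\<Sum>i\<in>UNIV. obj (\<lambda>z. ereal \<alpha> * gs i z) (x$i) (w$i))"
    unfolding obj_def sum.distrib by simp
  finally show ?thesis .
qed

lemma real_fne:
  fixes d e :: real
  assumes "d\<^sup>2 \<le> d * e"
  shows "\<bar>d\<bar> \<le> \<bar>e\<bar>" "\<bar>2 * d - e\<bar> \<le> \<bar>e\<bar>"
proof -
  have "0 \<le> (d - e)\<^sup>2" by simp
  then have "d\<^sup>2 \<le> e\<^sup>2" using assms by (simp add: power2_diff)
  then show "\<bar>d\<bar> \<le> \<bar>e\<bar>" by (simp add: abs_le_square_iff)
  have "(2 * d - e)\<^sup>2 \<le> e\<^sup>2" using assms by (simp add: power2_diff power2_eq_square algebra_simps)
  then show "\<bar>2 * d - e\<bar> \<le> \<bar>e\<bar>" by (simp add: abs_le_square_iff)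
qed

lemma wnorm_mono:
  fixes u v \<eta> :: "real^'n::finite"
  assumes "\<And>i. \<bar>u$i\<bar> \<le> \<bar>v$i\<bar>" and "\<And>i. \<eta>$i > 0"
  shows "wnorm_inf \<eta> u \<le> wnorm_inf \<eta> v"
  unfolding wnorm_inf_def
proof (subst Max_le_iff)
  show "\<forall>a\<in>range (\<lambda>i. \<bar>u $ i\<bar> / \<eta> $ i). a \<le> Max (range (\<lambda>i. \<bar>v $ i\<bar> / \<eta> $ i))"
  proof
    fix a assume "a \<in> range (\<lambda>i. \<bar>u $ i\<bar> / \<eta> $ i)"
    then obtain i where a: "a = \<bar>u $ i\<bar> / \<eta> $ i" by auto
    have "a \<le> \<bar>v $ i\<bar> / \<eta> $ i" unfolding a using assms[of i] by (simp add: divide_right_mono)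
    also have "\<dots> \<le> Max (range (\<lambda>i. \<bar>v $ i\<bar> / \<eta> $ i))" by (rule Max_ge) auto
    finally show "a \<le> Max (range (\<lambda>i. \<bar>v $ i\<bar> / \<eta> $ i))" .
  qed
qed auto


lemma uniq1:
  fixes f :: "real \<Rightarrow> ereal"
  assumes cv: "convex_fun f" and nm: "\<And>z. f z \<noteq> -\<infinity>" and al: "\<alpha> > 0"
    and fp: "f p \<noteq> \<infinity>" and fq: "f q \<noteq> \<infinity>"
    and mp: "\<And>w. obj (\<lambda>z. ereal \<alpha> * f z) x p \<le> obj (\<lambda>z. ereal \<alpha> * f z) x w"
    and mq: "\<And>w. obj (\<lambda>z. ereal \<alpha> * f z) y q \<le> obj (\<lambda>z. ereal \<alpha> * f z) y w"
  shows "(p - q)\<^sup>2 \<le> (p - q) * (x - y)"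
proof -
  have nm': "\<And>z. ereal \<alpha> * f z \<noteq> -\<infinity>" using nm al by (simp add: ereal_mult_eq_MInfty)
  have "(norm (p - q))\<^sup>2 \<le> inner (p - q) (x - y)"
    by (rule vi_unique[OF convex_scale[OF cv al] nm' _ _ mp mq]) (use fp fq al nm in \<open>auto simp: ereal_mult_eq_PInfty\<close>)
  then show ?thesis by simp
qed

theorem proposition41:
  fixes gs :: "'n::finite \<Rightarrow> real \<Rightarrow> ereal"
    and \<alpha> :: real and \<eta> :: "real^'n"
  assumes "\<And>i. proper_fun (gs i)"
    and "\<And>i. lsc_fun (gs i)"
    and "\<And>i. convex_fun (gs i)"
    and "\<alpha> > 0"
    and "\<And>i. \<eta> $ i > 0"
  shows "(\<forall>x y. wnorm_inf \<eta> (prox (\<lambda>z. ereal \<alpha> * sep_fun gs z) x - prox (\<lambda>z. ereal \<alpha> * sep_fun gs z) y)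
                 \<le> wnorm_inf \<eta> (x - y)) \<and>
         (\<forall>x y. wnorm_inf \<eta> ((2 *\<^sub>R prox (\<lambda>z. ereal \<alpha> * sep_fun gs z) x - x)
                            - (2 *\<^sub>R prox (\<lambda>z. ereal \<alpha> * sep_fun gs z) y - y))
                 \<le> wnorm_inf \<eta> (x - y))"
proof -
  note pr = assms(1) and ls = assms(2) and cv = assms(3) and al = assms(4) and et = assms(5)
  define h where "h = (\<lambda>z. ereal \<alpha> * sep_fun gs z)"
  define hi where "hi = (\<lambda>i z. ereal \<alpha> * gs i z)"
  have nm: "\<And>i z. gs i z \<noteq> -\<infinity>" using pr unfolding proper_fun_def by auto
  have "\<forall>i a. \<exists>p. (\<forall>w. obj (hi i) a p \<le> obj (hi i) a w) \<and> gs i p \<noteq> \<infinity>"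
    using exist1[OF pr ls cv al] unfolding hi_def by blast
  then obtain P where P: "\<And>i a w. obj (hi i) a (P i a) \<le> obj (hi i) a w"
    and Pf: "\<And>i a. gs i (P i a) \<noteq> \<infinity>" by metis
  have dec: "\<And>x w. obj h x w = (\<Sum>i\<in>UNIV. obj (hi i) (x$i) (w$i))"
    unfolding h_def hi_def using al by (intro decomp) simp
  have objnm: "\<And>i a z. obj (hi i) a z \<noteq> -\<infinity>"
    using nm al by (simp add: obj_def hi_def ereal_mult_eq_MInfty)
  have objfin: "\<And>i a z. obj (hi i) a z \<noteq> \<infinity> \<longleftrightarrow> gs i z \<noteq> \<infinity>"
    using nm al by (simp add: obj_def hi_def ereal_mult_eq_PInfty)
  have proxeq: "prox h x = (\<chi> i. P i (x$i))" for x
  proof -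
    define p where "p = (\<chi> i. P i (x$i))"
    have pd: "prox h x = (THE z. \<forall>w. obj h x z \<le> obj h x w)" by (simp add: prox_def obj_def)
    have pmin: "obj h x p \<le> obj h x w" for w
      unfolding dec by (rule sum_mono) (simp add: p_def P)
    have pfin: "obj h x p \<noteq> \<infinity>" unfolding dec sum_Pinfty using objfin Pf by (simp add: p_def)
    have uniq: "z = p" if zm: "\<And>w. obj h x z \<le> obj h x w" for z
    proof -
      have "z $ i = p $ i" for i
      proof -
        define F where "F = (\<lambda>j. obj (hi j) (x$j) (z$j))"
        define Rst where "Rst = (\<Sum>j\<in>UNIV - {i}. F j)"
        have zs: "obj h x z = F i + Rst" unfolding dec Rst_def F_def by (simp add: sum.remove)
        have Rnm: "Rst \<noteq> -\<infinity>" unfolding Rst_def F_def by (rule sum_not_minf) (rule objnm)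
        have "F i + Rst \<noteq> \<infinity>" using zm[of p] pfin zs by auto
        then have Fi: "F i \<noteq> \<infinity>" and Rf: "Rst \<noteq> \<infinity>" using Rnm objnm[of i] by (auto simp: F_def)
        have zmin: "obj (hi i) (x$i) (z$i) \<le> obj (hi i) (x$i) w" for w
        proof -
          define z' where "z' = (\<chi> j. if j = i then w else z$j)"
          have "obj h x z' = obj (hi i) (x$i) (z'$i) + (\<Sum>j\<in>UNIV-{i}. obj (hi j) (x$j) (z'$j))"
            unfolding dec by (rule sum.remove) auto
          also have "(\<Sum>j\<in>UNIV-{i}. obj (hi j) (x$j) (z'$j)) = Rst"
            unfolding Rst_def F_def by (rule sum.cong) (auto simp: z'_def)
          finally have "obj h x z' = obj (hi i) (x$i) w + Rst" by (simp add: z'_def)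
          then have "F i + Rst \<le> obj (hi i) (x$i) w + Rst" using zm[of z'] zs by simp
          then show ?thesis using Rf Rnm by (simp add: F_def ereal_add_le_add_iff2)
        qed
        have gz: "gs i (z$i) \<noteq> \<infinity>" using Fi objfin by (simp add: F_def)
        have "(z$i - P i (x$i))\<^sup>2 \<le> (z$i - P i (x$i)) * (x$i - x$i)"
          by (rule uniq1[OF cv nm al gz Pf]) (use zmin P in \<open>auto simp: hi_def\<close>)
        then show ?thesis by (simp add: p_def)
      qed
      then show ?thesis by (simp add: vec_eq_iff)
    qed
    show ?thesis unfolding pd p_def[symmetric]
      by (rule the_equality) (use pmin uniq in auto)
  qed
  have coord: "(P i (x$i) - P i (y$i))\<^sup>2 \<le> (P i (x$i) - P i (y$i)) * (x$i - y$i)" for i x y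
    by (rule uniq1[OF cv nm al Pf Pf]) (use P in \<open>auto simp: hi_def\<close>)
  show ?thesis unfolding h_def[symmetric]
  proof (intro conjI allI)
    fix x y :: "real^'n"
    show "wnorm_inf \<eta> (prox h x - prox h y) \<le> wnorm_inf \<eta> (x - y)"
      by (rule wnorm_mono[OF _ et]) (simp add: proxeq real_fne(1)[OF coord])
    show "wnorm_inf \<eta> ((2 *\<^sub>R prox h x - x) - (2 *\<^sub>R prox h y - y)) \<le> wnorm_inf \<eta> (x - y)"
    proof (rule wnorm_mono[OF _ et])
      fix i
      have "\<bar>2 * (P i (x$i) - P i (y$i)) - (x$i - y$i)\<bar> \<le> \<bar>x$i - y$i\<bar>" by (rule real_fne(2)[OF coord])
      then show "\<bar>((2 *\<^sub>R prox h x - x) - (2 *\<^sub>R prox h y - y)) $ i\<bar> \<le> \<bar>(x - y) $ i\<bar>"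
        by (simp add: proxeq algebra_simps)
    qed
  qed
qed

end
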